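(* Let $E$ be a linear space of $\mathbf{b}\times\mathbf{c}$ complex matrices and $r\le \min\{\mathbf{b},\mathbf{c}\}$. Suppose that, in suitable bases, every $X\in E$ has the block form $$X=\begin{pmatrix} \mathbf{x}&W\\ U&0\end{pmatrix}$$ with $\mathbf{x}$ of size $r\times r$, $W$ of size $r\times(\mathbf{c}-r)$, $U$ of size $(\mathbf{b}-r)\times r$ and zero lower-right block, and that $U\mathbf{x}^kW=0$ for all $k\ge 0$. Then every element of $E$ has rank at most $r$. *)

theory Defs
  imports "Jordan_Normal_Form.DL_Rank"
begin

definition mat_subspace :: "nat \<Rightarrow> nat \<Rightarrow> 'a::field mat set \<Rightarrow> bool" where
  "mat_subspace b c E \<longleftrightarrow> E \<subseteq> carrier_mat b c \<and> 0\<^sub>m b c \<in> E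
     \<and> (\<forall>X\<in>E. \<forall>Y\<in>E. X + Y \<in> E) \<and> (\<forall>a X. X \<in> E \<longrightarrow> a \<cdot>\<^sub>m X \<in> E)"

end

theory Submission imports Defs "Jordan_Normal_Form.Matrix_Kernel"
begin

lemma mat_linear_map:
  fixes A :: "'a::field mat"
  assumes A: "A \<in> carrier_mat n nc"
  shows "linear_map class_ring (module_vec TYPE('a) nc) (module_vec TYPE('a) n) (\<lambda>v. A *\<^sub>v v)"
  proof (auto simp add: linear_map_def)
    show "vectorspace class_ring (module_vec TYPE('a) nc)" by (rule vec_vs)
    show "vectorspace class_ring (module_vec TYPE('a) n)" by (rule vec_vs)
    show "mod_hom class_ring (module_vec TYPE('a) nc) (module_vec TYPE('a) n) (\<lambda>v. A *\<^sub>v v)"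
    proof (rule mod_hom.intro, unfold mod_hom_axioms_def)
      show "Module.module class_ring (module_vec TYPE('a) nc)" by (rule vec_module)
      show "Module.module class_ring (module_vec TYPE('a) n)" by (rule vec_module)
      show "(\<lambda>v. A *\<^sub>v v) \<in> LinearCombinations.module_hom class_ring (module_vec TYPE('a) nc) (module_vec TYPE('a) n)"
        using A by (auto simp add: LinearCombinations.module_hom_def Matrix.module_vec_def
            mult_add_distrib_mat_vec mult_mat_vec)
    qed
  qed

lemma rank_nullity_mat:
  fixes A :: "'a::field mat"
  assumes A: "A \<in> carrier_mat n nc"
  shows "vec_space.rank n A + kernel.dim nc A = nc"
proof -
  interpret NC: vec_space "TYPE('a)" nc .
  interpret NR: vec_space "TYPE('a)" n .
  interpret K: kernel n nc A by (unfold_locales, rule A)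
  have lm: "linear_map class_ring (module_vec TYPE('a) nc) (module_vec TYPE('a) n) (\<lambda>v. A *\<^sub>v v)"
  proof (auto simp add: linear_map_def)
    show "vectorspace class_ring (module_vec TYPE('a) nc)" by (rule vec_vs)
    show "vectorspace class_ring (module_vec TYPE('a) n)" by (rule vec_vs)
    show "mod_hom class_ring (module_vec TYPE('a) nc) (module_vec TYPE('a) n) (\<lambda>v. A *\<^sub>v v)"
    proof (rule mod_hom.intro, unfold mod_hom_axioms_def)
      show "Module.module class_ring (module_vec TYPE('a) nc)" by (rule vec_module)
      show "Module.module class_ring (module_vec TYPE('a) n)" by (rule vec_module)
      show "(\<lambda>v. A *\<^sub>v v) \<in> LinearCombinations.module_hom class_ring (module_vec TYPE('a) nc) (module_vec TYPE('a) n)"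
        using A by (auto simp add: LinearCombinations.module_hom_def Matrix.module_vec_def
            mult_add_distrib_mat_vec mult_mat_vec)
    qed
  qed
  interpret L: linear_map class_ring "module_vec TYPE('a) nc" "module_vec TYPE('a) n" "\<lambda>v. A *\<^sub>v v"
    by (rule lm)
  have im: "L.imT = NR.span (set (cols A))"
    using NR.col_space_eq[OF A] A unfolding L.im_def NR.col_space_def
    by (auto simp: Matrix.module_vec_def)
  have ker: "L.kerT = mat_kernel A"
    using A unfolding L.ker_def mat_kernel_def by (auto simp: Matrix.module_vec_def)
  from L.rank_nullity[OF NC.fin_dim]
  show ?thesis unfolding im ker NR.rank_def NC.dim_is_n by simp
qed

lemma rank_mono_colspace:
  fixes A B :: "'a::field mat"
  assumes A: "A \<in> carrier_mat n na" and B: "B \<in> carrier_mat n nb"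
    and sub: "\<And>z. z \<in> carrier_vec na \<Longrightarrow> \<exists>y\<in>carrier_vec nb. A *\<^sub>v z = B *\<^sub>v y"
  shows "vec_space.rank n A \<le> vec_space.rank n B"
proof -
  interpret NR: vec_space "TYPE('a)" n .
  have incl: "NR.span (set (cols A)) \<subseteq> NR.span (set (cols B))"
  proof
    fix v assume "v \<in> NR.span (set (cols A))"
    then have "v \<in> NR.col_space A" unfolding NR.col_space_def .
    then obtain z where z: "z \<in> carrier_vec na" "v = A *\<^sub>v z" and vc: "v \<in> carrier_vec n"
      unfolding NR.col_space_eq[OF A] using A by auto
    obtain y where y: "y \<in> carrier_vec nb" "A *\<^sub>v z = B *\<^sub>v y" using sub[OF z(1)] by auto
    have "v \<in> NR.col_space B" unfolding NR.col_space_eq[OF B] using B y z vc by auto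
    then show "v \<in> NR.span (set (cols B))" unfolding NR.col_space_def .
  qed
  have sB: "subspace class_ring (NR.span (set (cols B))) NR.V"
    by (metis B cols_dim carrier_matD(1) NR.span_is_subspace)
  have sA: "subspace class_ring (NR.span (set (cols A))) NR.V"
    by (metis A cols_dim carrier_matD(1) NR.span_is_subspace)
  have sub2: "subspace class_ring (NR.span (set (cols A))) (NR.vs (NR.span (set (cols B))))"
    using NR.nested_subspaces[OF sB sA incl] .
  have fB: "vectorspace.fin_dim class_ring (NR.vs (NR.span (set (cols B))))"
    using NR.fin_dim_span_cols[OF B] .
  have fA: "vectorspace.fin_dim class_ring (NR.vs (NR.span (set (cols A))))"
    using NR.fin_dim_span_cols[OF A] .
  show ?thesis unfolding NR.rank_def
    using vectorspace.subspace_dim[OF NR.subspace_is_vs[OF sB] sub2 fB] fA by auto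
qed

lemma kernel_dim_ge:
  fixes A J :: "'a::field mat"
  assumes A: "A \<in> carrier_mat n k" and J: "J \<in> carrier_mat k m"
    and AJ: "A * J = 0\<^sub>m n m"
    and inj: "\<And>z. z \<in> carrier_vec m \<Longrightarrow> J *\<^sub>v z = 0\<^sub>v k \<Longrightarrow> z = 0\<^sub>v m"
  shows "m \<le> kernel.dim k A"
proof -
  interpret NK: vec_space "TYPE('a)" k .
  interpret KA: kernel n k A by (unfold_locales, rule A)
  interpret KJ: kernel k m J by (unfold_locales, rule J)
  have kerJ: "mat_kernel J = {0\<^sub>v m}"
    using inj J by (auto simp: mat_kernel_def)
  have "KJ.Ker.gen_set {0\<^sub>v m}"
  proof -
    have "KJ.Ker.span {0\<^sub>v m} \<subseteq> mat_kernel J"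
      using KJ.Ker.span_closed[of "{0\<^sub>v m}"] kerJ by auto
    moreover have "0\<^sub>v m \<in> KJ.Ker.span {0\<^sub>v m}"
      using KJ.Ker.span_zero by simp
    ultimately show ?thesis using kerJ by auto
  qed
  then have "KJ.dim = 0" using KJ.Ker.dim0I by simp
  with rank_nullity_mat[OF J] have rJ: "NK.rank J = m" by simp
  have incl: "NK.span (set (cols J)) \<subseteq> mat_kernel A"
  proof
    fix v assume "v \<in> NK.span (set (cols J))"
    then have "v \<in> NK.col_space J" unfolding NK.col_space_def .
    then obtain z where z: "z \<in> carrier_vec m" "v = J *\<^sub>v z"
      unfolding NK.col_space_eq[OF J] using J by auto
    have "A *\<^sub>v v = (A * J) *\<^sub>v z" using z A J by (simp add: assoc_mult_mat_vec)
    also have "\<dots> = 0\<^sub>v n" unfolding AJ using z by (intro eq_vecI, auto simp: scalar_prod_def)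
    finally show "v \<in> mat_kernel A" using z J A by (auto simp: mat_kernel_def)
  qed
  have sJ: "subspace class_ring (NK.span (set (cols J))) NK.V"
    by (metis J cols_dim carrier_matD(1) NK.span_is_subspace)
  have sK: "subspace class_ring (mat_kernel A) NK.V"
  proof -
    interpret L: linear_map class_ring "module_vec TYPE('a) k" "module_vec TYPE('a) n" "\<lambda>v. A *\<^sub>v v"
      by (rule mat_linear_map[OF A])
    have ker: "L.kerT = mat_kernel A"
      using A unfolding L.ker_def mat_kernel_def by (auto simp: Matrix.module_vec_def)
    show ?thesis using L.kerT_is_subspace unfolding ker .
  qed
  have sub2: "subspace class_ring (NK.span (set (cols J))) (NK.vs (mat_kernel A))"
    using NK.nested_subspaces[OF sK sJ incl] .
  obtain bas where "finite bas" "KA.basis bas" using kernel_basis_exists[OF A] by auto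
  then have fK: "vectorspace.fin_dim class_ring (NK.vs (mat_kernel A))"
    unfolding KA.Ker.fin_dim_def KA.Ker.basis_def by auto
  have fJ: "vectorspace.fin_dim class_ring (NK.vs (NK.span (set (cols J))))"
    using NK.fin_dim_span_cols[OF J] .
  have "NK.rank J \<le> KA.dim" unfolding NK.rank_def
    using vectorspace.subspace_dim[OF NK.subspace_is_vs[OF sK] sub2 fK] fJ by auto
  then show ?thesis using rJ by simp
qed

lemma zero_mat_mult_vec: "z \<in> carrier_vec m \<Longrightarrow> 0\<^sub>m n m *\<^sub>v z = (0\<^sub>v n :: 'a::semiring_0 vec)"
  by (intro eq_vecI, auto simp: scalar_prod_def)

lemma core_rank:
  fixes x W U :: "'a::field mat"
  assumes x: "x \<in> carrier_mat r r" and W: "W \<in> carrier_mat r d" and U: "U \<in> carrier_mat e r"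
    and UW: "\<And>k. U * (x ^\<^sub>m k) * W = 0\<^sub>m e d"
  shows "vec_space.rank (r+e) (four_block_mat x W U (0\<^sub>m e d)) \<le> r"
proof -
  interpret R: vec_space "TYPE('a)" r .
  define K where "K = {v \<in> carrier_vec r. \<forall>k. U *\<^sub>v (x ^\<^sub>m k *\<^sub>v v) = 0\<^sub>v e}"
  have Kc: "K \<subseteq> carrier_vec r" unfolding K_def by auto
  have Kx: "x *\<^sub>v v \<in> K" if v: "v \<in> K" for v
  proof -
    have vc: "v \<in> carrier_vec r" using v K_def by auto
    have "U *\<^sub>v (x ^\<^sub>m k *\<^sub>v (x *\<^sub>v v)) = 0\<^sub>v e" for k
    proof -
      have eq: "x ^\<^sub>m k *\<^sub>v (x *\<^sub>v v) = x ^\<^sub>m (Suc k) *\<^sub>v v"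
        using x vc by (simp add: assoc_mult_mat_vec[of _ r r _ r])
      have "U *\<^sub>v (x ^\<^sub>m (Suc k) *\<^sub>v v) = 0\<^sub>v e" using v unfolding K_def by blast
      then show ?thesis using eq by metis
    qed
    then show ?thesis unfolding K_def using x vc by auto
  qed
  have KW: "W *\<^sub>v w \<in> K" if w: "w \<in> carrier_vec d" for w
  proof -
    have "U *\<^sub>v (x ^\<^sub>m k *\<^sub>v (W *\<^sub>v w)) = 0\<^sub>v e" for k
    proof -
      have xk: "x ^\<^sub>m k \<in> carrier_mat r r" using x by simp
      have "U *\<^sub>v (x ^\<^sub>m k *\<^sub>v (W *\<^sub>v w)) = (U * x ^\<^sub>m k * W) *\<^sub>v w"
        using xk U W w by (simp add: assoc_mult_mat_vec[of _ e r _ d] assoc_mult_mat_vec[of _ r r _ d])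
      also have "\<dots> = 0\<^sub>v e" unfolding UW using w by (rule zero_mat_mult_vec)
      finally show ?thesis .
    qed
    then show ?thesis unfolding K_def using W w by auto
  qed
  have K0: "U *\<^sub>v v = 0\<^sub>v e" if v: "v \<in> K" for v
  proof -
    have "U *\<^sub>v (x ^\<^sub>m 0 *\<^sub>v v) = 0\<^sub>v e" using v unfolding K_def by blast
    then show ?thesis using v x unfolding K_def by auto
  qed
  have ex: "\<exists>B. finite B \<and> maximal B (\<lambda>S. S \<subseteq> K \<and> R.lin_indpt S)"
  proof (rule maximal_exists[where N=r and B="{}"])
    fix A assume "A \<subseteq> K \<and> R.lin_indpt A"
    then have "A \<subseteq> carrier_vec r" "R.lin_indpt A" using Kc by auto
    then show "finite A \<and> card A \<le> r"
      using R.li_le_dim[OF R.fin_dim] R.dim_is_n by auto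
  next
    have "R.lin_indpt {}" by (rule R.finite_lin_indpt2, auto)
    then show "{} \<subseteq> K \<and> R.lin_indpt {}" by auto
  qed
  then obtain B where Bfin: "finite B" and Bmax: "maximal B (\<lambda>S. S \<subseteq> K \<and> R.lin_indpt S)"
    by blast
  have BK: "B \<subseteq> K" and Bli: "R.lin_indpt B" using Bmax unfolding maximal_def by auto
  have Bc: "B \<subseteq> carrier_vec r" using BK Kc by auto
  have Kspan: "v \<in> R.span B" if v: "v \<in> K" for v
  proof (cases "v \<in> B")
    case True
    then show ?thesis using R.span_mem Bc by auto
  next
    case False
    have "\<not> R.lin_indpt (insert v B)"
    proof
      assume "R.lin_indpt (insert v B)"
      then have "insert v B = B" using Bmax v BK unfolding maximal_def by blast
      then show False using False by auto
    qed
    then have "R.lin_dep (B \<union> {v})" by simp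
    then show ?thesis using R.lin_dep_iff_in_span[OF _ Bli _ False] Bc v Kc by auto
  qed
  obtain bs where bsd: "distinct bs" and bsB: "set bs = B" using finite_distinct_list[OF Bfin] by blast
  define m where "m = length bs"
  define Kb where "Kb = mat_of_cols r bs"
  have Kb: "Kb \<in> carrier_mat r m" unfolding Kb_def m_def by simp
  have bsc: "set bs \<subseteq> carrier_vec r" using bsB Bc by simp
  have colsKb: "cols Kb = bs" unfolding Kb_def using bsc by simp
  have colKb: "col Kb j = bs ! j" if "j < m" for j
    unfolding Kb_def using that bsc m_def by (simp add: nth_mem subset_iff)
  have inK: "\<exists>y\<in>carrier_vec m. v = Kb *\<^sub>v y" if v: "v \<in> K" for v
  proof -
    have "v \<in> R.col_space Kb" unfolding R.col_space_def colsKb bsB using Kspan[OF v] .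
    then show ?thesis unfolding R.col_space_eq[OF Kb] using Kb by auto
  qed
  have Kb_inj: "z = 0\<^sub>v m" if z: "z \<in> carrier_vec m" and Kz: "Kb *\<^sub>v z = 0\<^sub>v r" for z
  proof (rule ccontr)
    assume "z \<noteq> 0\<^sub>v m"
    from R.lin_depI[OF Kb z this Kz] bsd colsKb have "R.lin_dep B" using bsB by simp
    then show False using Bli by simp
  qed
  have ex2: "\<exists>y. y \<in> carrier_vec m \<and> x *\<^sub>v (bs ! j) = Kb *\<^sub>v y" if j: "j < m" for j
  proof -
    have "bs ! j \<in> K" using j BK bsB m_def nth_mem by blast
    then show ?thesis using inK[OF Kx] by blast
  qed
  define ys where "ys = map (\<lambda>j. SOME y. y \<in> carrier_vec m \<and> x *\<^sub>v (bs ! j) = Kb *\<^sub>v y) [0..<m]"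
  define Y where "Y = mat_of_cols m ys"
  have ysj: "ys ! j \<in> carrier_vec m \<and> x *\<^sub>v (bs ! j) = Kb *\<^sub>v (ys ! j)" if j: "j < m" for j
    unfolding ys_def using someI_ex[OF ex2[OF j]] j by simp
  have Y: "Y \<in> carrier_mat m m"
    using mat_of_cols_carrier(1)[of m ys] unfolding Y_def ys_def by simp
  have colY: "col Y j = ys ! j" if j: "j < m" for j
    unfolding Y_def using ysj[OF j] j by (simp add: ys_def)
  have xKb: "x * Kb = Kb * Y"
  proof (rule mat_col_eqI)
    fix j assume "j < dim_col (Kb * Y)"
    then have j: "j < m" using Y by simp
    have "col (x * Kb) j = x *\<^sub>v col Kb j" using col_mult2[OF x Kb j] .
    also have "\<dots> = Kb *\<^sub>v col Y j" using colKb[OF j] colY[OF j] ysj[OF j] by simp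
    also have "\<dots> = col (Kb * Y) j" using col_mult2[OF Kb Y j] by simp
    finally show "col (x * Kb) j = col (Kb * Y) j" .
  qed (insert x Kb Y, auto)
  have UKb: "U *\<^sub>v col Kb j = 0\<^sub>v e" if j: "j < m" for j
    using K0 colKb[OF j] j BK bsB m_def nth_mem by (metis subsetD)
  define M2 where "M2 = four_block_mat x Kb U (0\<^sub>m e m)"
  have M2: "M2 \<in> carrier_mat (r+e) (r+m)" unfolding M2_def using x Kb U by simp
  define J where "J = mat (r+m) m (\<lambda>(i,j). if i < r then Kb $$ (i,j) else (-Y) $$ (i-r, j))"
  have J: "J \<in> carrier_mat (r+m) m" unfolding J_def by simp
  have colJ: "col J j = col Kb j @\<^sub>v col (-Y) j" if j: "j < m" for j
    by (rule eq_vecI, insert j Kb Y, auto simp: J_def)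
  have M2J: "M2 * J = 0\<^sub>m (r+e) m"
  proof (rule mat_col_eqI)
    fix j assume "j < dim_col (0\<^sub>m (r+e) m)"
    then have j: "j < m" by simp
    have ckb: "col Kb j \<in> carrier_vec r" using Kb j by simp
    have cy: "col (-Y) j \<in> carrier_vec m" using Y j by simp
    have "col (M2 * J) j = M2 *\<^sub>v col J j" using col_mult2[OF M2 J j] .
    also have "\<dots> = (x *\<^sub>v col Kb j + Kb *\<^sub>v col (-Y) j) @\<^sub>v (U *\<^sub>v col Kb j + 0\<^sub>m e m *\<^sub>v col (-Y) j)"
      unfolding colJ[OF j] M2_def by (rule four_block_mat_mult_vec[OF x Kb U _ ckb cy], simp)
    also have "x *\<^sub>v col Kb j = col (Kb * Y) j" using col_mult2[OF x Kb j] xKb by metis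
    also have "Kb *\<^sub>v col (-Y) j = - col (Kb * Y) j"
      by (intro eq_vecI, insert Kb Y j, auto)
    also have "col (Kb * Y) j + - col (Kb * Y) j = 0\<^sub>v r"
      using Kb Y j by (intro uminus_r_inv_vec, simp)
    also have "U *\<^sub>v col Kb j + 0\<^sub>m e m *\<^sub>v col (-Y) j = 0\<^sub>v e"
      using UKb[OF j] zero_mat_mult_vec[OF cy] by simp
    also have "0\<^sub>v r @\<^sub>v 0\<^sub>v e = col (0\<^sub>m (r+e) m) j" using j by (intro eq_vecI, auto)
    finally show "col (M2 * J) j = col (0\<^sub>m (r+e) m) j" .
  qed (insert M2 J, auto)
  have J_inj: "z = 0\<^sub>v m" if z: "z \<in> carrier_vec m" and Jz: "J *\<^sub>v z = 0\<^sub>v (r+m)" for z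
  proof (rule Kb_inj[OF z])
    show "Kb *\<^sub>v z = 0\<^sub>v r"
    proof (rule eq_vecI)
      fix i assume "i < dim_vec (0\<^sub>v r :: 'a vec)"
      then have i: "i < r" by simp
      have "row J i = row Kb i" using i Kb by (intro eq_vecI, auto simp: J_def)
      then have "(Kb *\<^sub>v z) $ i = (J *\<^sub>v z) $ i" using i Kb J by simp
      also have "\<dots> = 0" using Jz i by simp
      finally show "(Kb *\<^sub>v z) $ i = 0\<^sub>v r $ i" using i by simp
    qed (insert Kb, simp)
  qed
  have km: "m \<le> kernel.dim (r+m) M2" by (rule kernel_dim_ge[OF M2 J M2J J_inj])
  have rM2: "vec_space.rank (r+e) M2 \<le> r" using rank_nullity_mat[OF M2] km by simp
  have N: "four_block_mat x W U (0\<^sub>m e d) \<in> carrier_mat (r+e) (r+d)" using x W U by simp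
  have "vec_space.rank (r+e) (four_block_mat x W U (0\<^sub>m e d)) \<le> vec_space.rank (r+e) M2"
  proof (rule rank_mono_colspace[OF N M2])
    fix z :: "'a vec" assume z: "z \<in> carrier_vec (r+d)"
    define a where "a = vec r (\<lambda>i. z $ i)"
    define w where "w = vec d (\<lambda>i. z $ (r+i))"
    have a: "a \<in> carrier_vec r" and w: "w \<in> carrier_vec d" unfolding a_def w_def by auto
    have zaw: "z = a @\<^sub>v w" unfolding a_def w_def by (rule eq_vecI, insert z, auto)
    obtain y where y: "y \<in> carrier_vec m" and Wy: "W *\<^sub>v w = Kb *\<^sub>v y" using inK[OF KW[OF w]] by auto
    have "four_block_mat x W U (0\<^sub>m e d) *\<^sub>v z = (x *\<^sub>v a + W *\<^sub>v w) @\<^sub>v (U *\<^sub>v a + 0\<^sub>m e d *\<^sub>v w)"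
      unfolding zaw by (rule four_block_mat_mult_vec[OF x W U _ a w], simp)
    also have "\<dots> = (x *\<^sub>v a + Kb *\<^sub>v y) @\<^sub>v (U *\<^sub>v a + 0\<^sub>m e m *\<^sub>v y)"
      using Wy zero_mat_mult_vec[OF w] zero_mat_mult_vec[OF y] by simp
    also have "\<dots> = M2 *\<^sub>v (a @\<^sub>v y)"
      unfolding M2_def by (rule four_block_mat_mult_vec[OF x Kb U _ a y, symmetric], simp)
    finally show "\<exists>y\<in>carrier_vec (r+m). four_block_mat x W U (0\<^sub>m e d) *\<^sub>v z = M2 *\<^sub>v y"
      using a y by auto
  qed
  then show ?thesis using rM2 by simp
qed

lemma rank_left_invertible:
  fixes A P Pi :: "'a::field mat"
  assumes A: "A \<in> carrier_mat n nc" and P: "P \<in> carrier_mat n n" and Pi: "Pi \<in> carrier_mat n n"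
    and inv: "Pi * P = 1\<^sub>m n"
  shows "vec_space.rank n (P * A) = vec_space.rank n A"
proof -
  have PA: "P * A \<in> carrier_mat n nc" using P A by simp
  have k: "mat_kernel (P * A) = mat_kernel A" by (rule mat_kernel_mult_eq[OF A P Pi inv])
  from rank_nullity_mat[OF PA] rank_nullity_mat[OF A] show ?thesis unfolding k by simp
qed

theorem mainTheorem5:
  fixes E :: "complex mat set" and b c r :: nat and P Q :: "complex mat"
  assumes "mat_subspace b c E"
    and "r \<le> min b c"
    and "P \<in> carrier_mat b b" and "invertible_mat P"
    and "Q \<in> carrier_mat c c" and "invertible_mat Q"
    and "\<And>X x W U Z. X \<in> E \<Longrightarrow> split_block (P * X * Q) r r = (x, W, U, Z) \<Longrightarrow>
           Z = 0\<^sub>m (b - r) (c - r) \<and> (\<forall>k. U * (x ^\<^sub>m k) * W = 0\<^sub>m (b - r) (c - r))"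
  shows "\<forall>X\<in>E. vec_space.rank b X \<le> r"
proof
  fix X assume XE: "X \<in> E"
  have Xc: "X \<in> carrier_mat b c" using assms(1) XE unfolding mat_subspace_def by auto
  have P: "P \<in> carrier_mat b b" and Q: "Q \<in> carrier_mat c c" using assms by auto
  obtain Pi where PPi: "P * Pi = 1\<^sub>m b" and PiP0: "Pi * P = 1\<^sub>m (dim_row Pi)"
    using assms(4) P unfolding invertible_mat_def inverts_mat_def by auto
  have dr: "dim_row Pi = b"
    using arg_cong[OF PiP0, of dim_col] P by simp
  have dc: "dim_col Pi = b"
    using arg_cong[OF PPi, of dim_col] by simp
  have Pi: "Pi \<in> carrier_mat b b" using dr dc by auto
  have PiP: "Pi * P = 1\<^sub>m b" using PiP0 dr by simp
  obtain Qi where QQi: "Q * Qi = 1\<^sub>m c" and QiQ0: "Qi * Q = 1\<^sub>m (dim_row Qi)"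
    using assms(6) Q unfolding invertible_mat_def inverts_mat_def by auto
  have dr: "dim_row Qi = c"
    using arg_cong[OF QiQ0, of dim_col] Q by simp
  have dc: "dim_col Qi = c"
    using arg_cong[OF QQi, of dim_col] by simp
  have Qi: "Qi \<in> carrier_mat c c" using dr dc by auto
  have QiQ: "Qi * Q = 1\<^sub>m c" using QiQ0 dr by simp
  define N where "N = P * X * Q"
  have N: "N \<in> carrier_mat b c" unfolding N_def using P Xc Q by simp
  obtain x W U Z where sb: "split_block N r r = (x, W, U, Z)" by (cases "split_block N r r") auto
  have dims: "dim_row N = r + (b - r)" "dim_col N = r + (c - r)" using N assms(2) by auto
  note spl = split_block[OF sb dims]
  from assms(7)[OF XE sb[unfolded N_def]]
  have Z0: "Z = 0\<^sub>m (b - r) (c - r)" and UW: "\<And>k. U * (x ^\<^sub>m k) * W = 0\<^sub>m (b - r) (c - r)" by auto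
  have "vec_space.rank (r + (b - r)) (four_block_mat x W U (0\<^sub>m (b - r) (c - r))) \<le> r"
    by (rule core_rank[OF spl(1) spl(2) spl(3) UW])
  then have rN: "vec_space.rank b N \<le> r" using spl(5) Z0 assms(2) by simp
  have PX: "P * X \<in> carrier_mat b c" using P Xc by simp
  have "vec_space.rank b (P * X) \<le> vec_space.rank b N"
  proof (rule rank_mono_colspace[OF PX N])
    fix z :: "complex vec" assume z: "z \<in> carrier_vec c"
    have "N *\<^sub>v (Qi *\<^sub>v z) = (P * X) *\<^sub>v (Q *\<^sub>v (Qi *\<^sub>v z))"
      unfolding N_def by (rule assoc_mult_mat_vec[OF PX Q], insert Qi z, simp)
    also have "Q *\<^sub>v (Qi *\<^sub>v z) = z"
      using Q Qi z QQi by (metis assoc_mult_mat_vec one_mult_mat_vec)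
    finally show "\<exists>y\<in>carrier_vec c. P * X *\<^sub>v z = N *\<^sub>v y" using Qi z by (metis mult_mat_vec_carrier)
  qed
  moreover have "vec_space.rank b (P * X) = vec_space.rank b X"
    by (rule rank_left_invertible[OF Xc P Pi PiP])
  ultimately show "vec_space.rank b X \<le> r" using rN by simp
qed

end
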